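(* Suppose $t_i^{(m)},g_i^{(m)}\in\mathbb{C}$ ($m,i\in\mathbb{Z}$) satisfy $$\left(i-\tfrac{n}{2}\right)t_i^{(m)}=\left(\tfrac{3m}{2}-n-i\right)g_{n-m+i}^{(n)}\quad\text{for all }m,n,i\in\mathbb{Z}.$$ Then $t_i^{(m)}=g_i^{(m)}=0$ for all $m,i\in\mathbb{Z}$. *)

theory Defs
  imports Complex_Main
begin

end

theory Submission
  imports Defs
begin

theorem proposition2p2:
  fixes t g :: "int \<Rightarrow> int \<Rightarrow> complex"
  assumes "\<And>m n i. (of_int i - of_int n / 2) * t m i
              = (3 * of_int m / 2 - of_int n - of_int i) * g n (n - m + i)"
  shows "\<forall>m i. t m i = 0 \<and> g m i = 0"
proof -
  note A = assms
  have T: "t m i = 0" for m i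
  proof -
    define d where "d = m - i"
    define k where "k = max i d + 1"
    have "(of_int k - of_int (2*k) / 2) * t (k+d) k
          = (3 * of_int (k+d) / 2 - of_int (2*k) - of_int k) * g (2*k) (2*k - (k+d) + k)"
      by (rule A)
    hence "(3 * of_int (k+d) / 2 - of_int (2*k) - of_int k) * g (2*k) (2*k - d) = (0::complex)"
      by (auto simp add: algebra_simps)
    moreover have "(3 * of_int (k+d) / 2 - of_int (2*k) - of_int k) \<noteq> (0::complex)"
    proof
      assume "(3 * of_int (k+d) / 2 - of_int (2*k) - of_int k) = (0::complex)"
      hence "(of_int (3*d - 3*k) :: complex) = 0" by (simp add: field_simps)
      hence "3*d - 3*k = 0" by (simp only: of_int_eq_0_iff)
      thus False unfolding k_def by simp
    qed
    ultimately have G0: "g (2*k) (2*k - d) = 0" by simp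
    have "(of_int i - of_int (2*k) / 2) * t m i
          = (3 * of_int m / 2 - of_int (2*k) - of_int i) * g (2*k) (2*k - m + i)"
      by (rule A)
    hence "(of_int i - of_int k) * t m i = 0"
      using G0 unfolding d_def by (simp add: algebra_simps)
    moreover have "(of_int i - of_int k :: complex) \<noteq> 0"
    proof
      assume "(of_int i - of_int k :: complex) = 0"
      hence "(of_int (i - k) :: complex) = 0" by simp
      hence "i - k = 0" by (simp only: of_int_eq_0_iff)
      thus False unfolding k_def by simp
    qed
    ultimately show ?thesis by simp
  qed
  have G: "g n j = 0" for n j
  proof -
    define d where "d = n - j"
    define i where "i = 2*n - 3*d + 1"
    have "(of_int i - of_int n / 2) * t (i+d) i
          = (3 * of_int (i+d) / 2 - of_int n - of_int i) * g n (n - (i+d) + i)"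
      by (rule A)
    hence "(3 * of_int (i+d) / 2 - of_int n - of_int i) * g n j = (0::complex)"
      using T unfolding d_def by simp
    moreover have "(3 * of_int (i+d) / 2 - of_int n - of_int i) \<noteq> (0::complex)"
    proof
      assume "(3 * of_int (i+d) / 2 - of_int n - of_int i) = (0::complex)"
      hence "(of_int (i + 3*d - 2*n) :: complex) = 0" by (simp add: field_simps)
      hence "i + 3*d - 2*n = 0" by (simp only: of_int_eq_0_iff)
      thus False unfolding i_def by simp
    qed
    ultimately show ?thesis by simp
  qed
  show ?thesis using T G by blast
qed

end
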